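(* Let $X$ be a finite set and let $K\colon X\times X\to\mathbb{R}$ satisfy $K(y,x)=K(x,y)\geq 0$ and $K(x,x)=0$ for all $x,y\in X$. If $K$ is conditionally strictly negative definite, then there exist a strictly positive definite kernel $A\colon X\times X\to\mathbb{R}$ and a constant $c>0$ such that $K(x,y)=-A(x,y)+c$ for all $x,y\in X$.
   Context: A kernel $K$ on a set $X$ is conditionally strictly negative definite if for every finitely supported $\lambda\colon X\to\mathbb{C}$ with $\lambda\neq 0$ and $\sum_{x\in X}\lambda(x)=0$ one has $\sum_{x,y\in X}\lambda(x)\overline{\lambda(y)}K(x,y)<0$. A hermitian kernel $A$ ($A(x,y)=\overline{A(y,x)}$) is strictly positive definite if for every finitely supported $\lambda\colon X\to\mathbb{C}$ with $\lambda\neq0$ one has $\sum_{x,y\in X}\lambda(x)\overline{\lambda(y)}A(x,y)>0$. *)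

theory Defs
  imports "HOL-Analysis.Analysis" "HOL-Library.Complex_Order"
begin

text \<open>Kernels on a finite set X are modelled as functions on a type 'a restricted to X. The inequalities are in the complex partial order
  of HOL-Library.Complex_Order (z < 0 iff z is real and negative).\<close>

definition cond_strictly_neg_def_on :: "'a set \<Rightarrow> ('a \<Rightarrow> 'a \<Rightarrow> real) \<Rightarrow> bool" where
  "cond_strictly_neg_def_on X K \<longleftrightarrow>
     (\<forall>l::'a \<Rightarrow> complex. (\<forall>x. x \<notin> X \<longrightarrow> l x = 0) \<and> (\<exists>x\<in>X. l x \<noteq> 0)
        \<and> (\<Sum>x\<in>X. l x) = 0 \<longrightarrow>
        (\<Sum>x\<in>X. \<Sum>y\<in>X. l x * cnj (l y) * complex_of_real (K x y)) < 0)"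

definition strictly_pos_def_on :: "'a set \<Rightarrow> ('a \<Rightarrow> 'a \<Rightarrow> real) \<Rightarrow> bool" where
  "strictly_pos_def_on X A \<longleftrightarrow>
     (\<forall>x\<in>X. \<forall>y\<in>X. A x y = A y x) \<and>
     (\<forall>l::'a \<Rightarrow> complex. (\<forall>x. x \<notin> X \<longrightarrow> l x = 0) \<and> (\<exists>x\<in>X. l x \<noteq> 0) \<longrightarrow>
        (\<Sum>x\<in>X. \<Sum>y\<in>X. l x * cnj (l y) * complex_of_real (A x y)) > 0)"

end

theory Submission
  imports Defs
begin

definition QF :: "'a set \<Rightarrow> ('a \<Rightarrow> 'a \<Rightarrow> real) \<Rightarrow> ('a \<Rightarrow> complex) \<Rightarrow> complex" where
  "QF X K l = (\<Sum>x\<in>X. \<Sum>y\<in>X. l x * cnj (l y) * complex_of_real (K x y))"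

lemma QF_real:
  assumes "\<forall>x\<in>X. \<forall>y\<in>X. K y x = K x y"
  shows "Im (QF X K l) = 0"
proof -
  have "cnj (QF X K l) = (\<Sum>x\<in>X. \<Sum>y\<in>X. cnj (l x) * l y * complex_of_real (K x y))"
    by (simp add: QF_def)
  also have "\<dots> = (\<Sum>y\<in>X. \<Sum>x\<in>X. cnj (l x) * l y * complex_of_real (K x y))"
    by (rule sum.swap)
  also have "\<dots> = QF X K l"
    unfolding QF_def using assms
    by (intro sum.cong refl) (auto simp: mult_ac)
  finally show ?thesis
    by (metis Reals_cnj_iff complex_is_Real_iff)
qed

lemma QF_scale: "QF X K (\<lambda>x. a * l x) = a * cnj a * QF X K l"
  unfolding QF_def by (simp add: sum_distrib_left mult_ac)

lemma cont_g: "continuous_on UNIV (\<lambda>l::'a\<Rightarrow>complex. Re (QF X K l))"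
  unfolding QF_def
  by (intro continuous_intros continuous_on_product_then_coordinatewise continuous_on_id)

lemma cont_h: "continuous_on UNIV (\<lambda>l::'a\<Rightarrow>complex. (cmod (\<Sum>x\<in>X. l x))^2)"
  by (intro continuous_intros continuous_on_product_then_coordinatewise continuous_on_id)

lemma cont_n: "continuous_on UNIV (\<lambda>l::'a\<Rightarrow>complex. (\<Sum>x\<in>X. (cmod (l x))^2))"
  by (intro continuous_intros continuous_on_product_then_coordinatewise continuous_on_id)

lemma compact_T:
  assumes "finite X"
  shows "compact {l::'a\<Rightarrow>complex. l \<in> Pi UNIV (\<lambda>x. if x \<in> X then cball 0 1 else {0})
                    \<and> (\<Sum>x\<in>X. (cmod (l x))^2) = 1}" (is "compact ?T")
proof -
  let ?S = "\<lambda>x::'a. if x \<in> X then cball (0::complex) 1 else {0}"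
  have "compactin (product_topology (\<lambda>i. euclidean) UNIV) (PiE UNIV ?S)"
    by (subst compactin_PiE) auto
  hence c: "compact (Pi UNIV ?S)"
    by (simp add: euclidean_product_topology PiE_UNIV_domain)
  have cl: "closed {l::'a\<Rightarrow>complex. (\<Sum>x\<in>X. (cmod (l x))^2) = 1}"
    by (intro closed_Collect_eq cont_n continuous_on_const)
  have "?T = Pi UNIV ?S \<inter> {l. (\<Sum>x\<in>X. (cmod (l x))^2) = 1}" by auto
  thus ?thesis using c cl by (simp add: compact_Int_closed)
qed

lemma cover_bound:
  fixes K :: "'a \<Rightarrow> 'a \<Rightarrow> real"
  assumes fin: "finite X" and sym: "\<forall>x\<in>X. \<forall>y\<in>X. K y x = K x y"
    and cnd: "cond_strictly_neg_def_on X K"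
  shows "\<exists>N::nat. \<forall>l\<in>{l::'a\<Rightarrow>complex. l \<in> Pi UNIV (\<lambda>x. if x \<in> X then cball 0 1 else {0})
                    \<and> (\<Sum>x\<in>X. (cmod (l x))^2) = 1}.
          Re (QF X K l) < real N * (cmod (\<Sum>x\<in>X. l x))^2"
proof -
  let ?T = "{l::'a\<Rightarrow>complex. l \<in> Pi UNIV (\<lambda>x. if x \<in> X then cball 0 1 else {0})
                    \<and> (\<Sum>x\<in>X. (cmod (l x))^2) = 1}"
  let ?f = "\<lambda>n::nat. {l::'a\<Rightarrow>complex. Re (QF X K l) < real n * (cmod (\<Sum>x\<in>X. l x))^2}"
  have opn: "open (?f n)" for n
    by (intro open_Collect_less cont_g continuous_intros cont_h)
  have cov: "?T \<subseteq> (\<Union>n\<in>UNIV. ?f n)"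
  proof
    fix l assume lT: "l \<in> ?T"
    show "l \<in> (\<Union>n\<in>UNIV. ?f n)"
    proof (cases "cmod (\<Sum>x\<in>X. l x) = 0")
      case True
      have out: "\<forall>x. x \<notin> X \<longrightarrow> l x = 0" using lT by (auto simp: Pi_iff split: if_splits)
      have nz: "\<exists>x\<in>X. l x \<noteq> 0"
      proof (rule ccontr)
        assume "\<not> ?thesis"
        hence "(\<Sum>x\<in>X. (cmod (l x))^2) = 0" by simp
        with lT show False by simp
      qed
      have "(\<Sum>x\<in>X. l x) = 0" using True by simp
      hence "QF X K l < 0" using cnd out nz unfolding cond_strictly_neg_def_on_def QF_def by blast
      hence "Re (QF X K l) < 0" by (simp add: less_complex_def)
      hence "l \<in> ?f 0" using True by simp
      thus ?thesis by blast
    next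
      case False
      hence hp: "(cmod (\<Sum>x\<in>X. l x))^2 > 0" by simp
      obtain n::nat where "Re (QF X K l) / (cmod (\<Sum>x\<in>X. l x))^2 < real n"
        using reals_Archimedean2 by blast
      hence "Re (QF X K l) < real n * (cmod (\<Sum>x\<in>X. l x))^2"
        using hp by (simp add: divide_less_eq)
      thus ?thesis by blast
    qed
  qed
  obtain C where C: "C \<subseteq> UNIV" "finite C" "?T \<subseteq> (\<Union>n\<in>C. ?f n)"
    using compactE_image[OF compact_T[OF fin] opn cov] by blast
  define N where "N = Max (insert 0 C)"
  have "\<forall>l\<in>?T. Re (QF X K l) < real N * (cmod (\<Sum>x\<in>X. l x))^2"
  proof
    fix l assume "l \<in> ?T"
    then obtain n where n: "n \<in> C" "Re (QF X K l) < real n * (cmod (\<Sum>x\<in>X. l x))^2"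
      using C(3) by blast
    have "n \<le> N" unfolding N_def using C(2) n(1) by simp
    hence "real n * (cmod (\<Sum>x\<in>X. l x))^2 \<le> real N * (cmod (\<Sum>x\<in>X. l x))^2"
      by (intro mult_right_mono) auto
    thus "Re (QF X K l) < real N * (cmod (\<Sum>x\<in>X. l x))^2" using n(2) by linarith
  qed
  thus ?thesis by blast
qed

theorem theorem1:
  fixes X :: "'a set" and K :: "'a \<Rightarrow> 'a \<Rightarrow> real"
  assumes "finite X"
    and "\<forall>x\<in>X. \<forall>y\<in>X. K y x = K x y \<and> K x y \<ge> 0"
    and "\<forall>x\<in>X. K x x = 0"
    and "cond_strictly_neg_def_on X K"
  shows "\<exists>(A :: 'a \<Rightarrow> 'a \<Rightarrow> real) (c :: real). strictly_pos_def_on X A \<and> c > 0 \<and>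
           (\<forall>x\<in>X. \<forall>y\<in>X. K x y = - A x y + c)"
proof -
  have sym: "\<forall>x\<in>X. \<forall>y\<in>X. K y x = K x y" using assms(2) by blast
  obtain N :: nat where N: "\<forall>l\<in>{l::'a\<Rightarrow>complex. l \<in> Pi UNIV (\<lambda>x. if x \<in> X then cball 0 1 else {0})
                    \<and> (\<Sum>x\<in>X. (cmod (l x))^2) = 1}.
          Re (QF X K l) < real N * (cmod (\<Sum>x\<in>X. l x))^2"
    using cover_bound[OF assms(1) sym assms(4)] by blast
  define c :: real where "c = real N + 1"
  define A where "A = (\<lambda>x y. c - K x y)"
  have pos: "(\<Sum>x\<in>X. \<Sum>y\<in>X. l x * cnj (l y) * complex_of_real (A x y)) > 0"
    if out: "\<forall>x. x \<notin> X \<longrightarrow> l x = 0" and nz: "\<exists>x\<in>X. l x \<noteq> 0" for l :: "'a \<Rightarrow> complex"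
  proof -
    define s where "s = (\<Sum>x\<in>X. (cmod (l x))^2)"
    obtain x0 where x0: "x0 \<in> X" "l x0 \<noteq> 0" using nz by blast
    have "(cmod (l x0))^2 \<le> s" unfolding s_def
      using x0 assms(1) by (intro member_le_sum) auto
    moreover have "(cmod (l x0))^2 > 0" using x0 by simp
    ultimately have sp: "s > 0" by linarith
    define r where "r = sqrt s"
    have rp: "r > 0" using sp r_def by simp
    have r2: "r^2 = s" using sp r_def by simp
    define t where "t = (\<lambda>x. l x / complex_of_real r)"
    have lt: "l = (\<lambda>x. complex_of_real r * t x)" using rp by (auto simp: t_def)
    have tn: "(\<Sum>x\<in>X. (cmod (t x))^2) = 1"
    proof -
      have "(\<Sum>x\<in>X. (cmod (t x))^2) = (\<Sum>x\<in>X. (cmod (l x))^2 / r^2)"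
        by (simp add: t_def norm_divide power_divide)
      also have "\<dots> = s / r^2" by (simp add: s_def sum_divide_distrib)
      finally show ?thesis using r2 sp by simp
    qed
    have tP: "t \<in> Pi UNIV (\<lambda>x. if x \<in> X then cball 0 1 else {0})"
    proof (clarsimp simp: Pi_iff, intro conjI impI)
      fix x assume "x \<in> X"
      hence "(cmod (t x))^2 \<le> (\<Sum>x\<in>X. (cmod (t x))^2)"
        using assms(1) by (intro member_le_sum) auto
      hence "(cmod (t x))^2 \<le> 1" using tn by simp
      thus "cmod (t x) \<le> 1" by (simp add: power_le_one_iff)
    next
      fix x assume "x \<notin> X" thus "t x = 0" using out by (simp add: t_def)
    qed
    have tb: "Re (QF X K t) < real N * (cmod (\<Sum>x\<in>X. t x))^2" using N tn tP by blast
    have e1: "(\<Sum>x\<in>X. \<Sum>y\<in>X. l x * cnj (l y) * complex_of_real (A x y))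
        = complex_of_real c * ((\<Sum>x\<in>X. l x) * cnj (\<Sum>x\<in>X. l x)) - QF X K l"
    proof -
      have "(\<Sum>x\<in>X. l x) * cnj (\<Sum>x\<in>X. l x) = (\<Sum>x\<in>X. \<Sum>y\<in>X. l x * cnj (l y))"
        by (simp add: sum_product cnj_sum)
      thus ?thesis unfolding A_def QF_def
        by (simp add: sum_distrib_left algebra_simps sum_subtractf)
    qed
    have e2: "(\<Sum>x\<in>X. l x) * cnj (\<Sum>x\<in>X. l x) = complex_of_real ((cmod (\<Sum>x\<in>X. l x))^2)"
      by (rule complex_norm_square[symmetric])
    have sl: "(\<Sum>x\<in>X. l x) = complex_of_real r * (\<Sum>x\<in>X. t x)"
      by (subst lt) (simp add: sum_distrib_left)
    have ql: "QF X K l = complex_of_real (r^2) * QF X K t"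
      by (subst lt, subst QF_scale) (simp add: power2_eq_square)
    have im: "Im (QF X K l) = 0" by (rule QF_real[OF sym])
    have "Re (QF X K t) < c * (cmod (\<Sum>x\<in>X. t x))^2"
      using tb unfolding c_def by (smt (verit) mult_right_mono zero_le_power2)
    hence "r^2 * Re (QF X K t) < r^2 * (c * (cmod (\<Sum>x\<in>X. t x))^2)"
      using rp by simp
    moreover have "Re (QF X K l) = r^2 * Re (QF X K t)" by (simp add: ql)
    moreover have "(cmod (\<Sum>x\<in>X. l x))^2 = r^2 * (cmod (\<Sum>x\<in>X. t x))^2"
      using rp by (simp add: sl norm_mult power_mult_distrib)
    ultimately have "Re (QF X K l) < c * (cmod (\<Sum>x\<in>X. l x))^2" by (simp add: algebra_simps)
    thus ?thesis unfolding e1 e2 using im by (simp add: less_complex_def)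
  qed
  have "strictly_pos_def_on X A"
    unfolding strictly_pos_def_on_def using pos sym by (auto simp: A_def)
  moreover have "c > 0" by (simp add: c_def)
  moreover have "\<forall>x\<in>X. \<forall>y\<in>X. K x y = - A x y + c" by (simp add: A_def)
  ultimately show ?thesis by blast
qed

end
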